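(* Let $\sigma : X^+ \to S$ be a choice of generators for a semigroup $S$. Let $S^0$ be $S$ with a new zero $0$ adjoined, let $Y = X \cup \{z\}$ for a new letter $z$, and let $\tau : Y^+ \to S^0$ be the unique extension of $\sigma$ to a choice of generators for $S^0$ (so $z\tau = 0$). Then $L_\sigma(S) = L_\tau(S^0) \cap \hat{X}^*$.
   Context: For a semigroup $S$, $S^1$ denotes the monoid obtained by adjoining a new identity $1$ (even if $S$ already has one). A choice of generators for $S$ is a surjective morphism $\sigma : X^+ \to S$ from a free semigroup; it extends uniquely to $\sigma^1 : X^* \to S^1$. Let $\overline{X} = \{\overline{x} : x \in X\}$ be a set of formal inverses, $\hat{X} = X \cup \overline{X}$. The loop automaton of $S$ with respect to $\sigma$ is the directed labelled graph with vertex set $S^1$, having for each $a \in S^1$ and $x \in X$ an edge from $a$ to $a(x\sigma)$ labelled $x$ and an edge from $a(x\sigma)$ to $a$ labelled $\overline{x}$. The loop problem $L_\sigma(S) \subseteq \hat{X}^*$ is the set of words labelling paths from $1$ to $1$ in this graph (including the empty word). *)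

theory Defs
  imports Main
begin

definition semigroup_on :: "'a set \<Rightarrow> ('a \<Rightarrow> 'a \<Rightarrow> 'a) \<Rightarrow> bool" where
  "semigroup_on S m \<longleftrightarrow> (\<forall>a\<in>S. \<forall>b\<in>S. m a b \<in> S) \<and>
     (\<forall>a\<in>S. \<forall>b\<in>S. \<forall>c\<in>S. m (m a b) c = m a (m b c))"

fun word_eval :: "('a \<Rightarrow> 'a \<Rightarrow> 'a) \<Rightarrow> ('x \<Rightarrow> 'a) \<Rightarrow> 'x list \<Rightarrow> 'a" where
  "word_eval m \<sigma> [] = undefined"
| "word_eval m \<sigma> (x # xs) = foldl (\<lambda>a y. m a (\<sigma> y)) (\<sigma> x) xs"

definition choice_of_generators ::
  "'a set \<Rightarrow> ('a \<Rightarrow> 'a \<Rightarrow> 'a) \<Rightarrow> 'x set \<Rightarrow> ('x \<Rightarrow> 'a) \<Rightarrow> bool" where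
  "choice_of_generators S m X \<sigma> \<longleftrightarrow> (\<forall>x\<in>X. \<sigma> x \<in> S) \<and>
     (\<forall>s\<in>S. \<exists>w. w \<in> lists X \<and> w \<noteq> [] \<and> word_eval m \<sigma> w = s)"

text \<open>S^1: adjoin a new identity None.\<close>
definition monoid1 :: "'a set \<Rightarrow> 'a option set" where
  "monoid1 S = insert None (Some ` S)"

fun mult1 :: "('a \<Rightarrow> 'a \<Rightarrow> 'a) \<Rightarrow> 'a option \<Rightarrow> 'a option \<Rightarrow> 'a option" where
  "mult1 m None b = b"
| "mult1 m (Some a) None = Some a"
| "mult1 m (Some a) (Some b) = Some (m a b)"

text \<open>S^0: adjoin a new zero None.\<close>
definition semigroup0 :: "'a set \<Rightarrow> 'a option set" where
  "semigroup0 S = insert None (Some ` S)"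

fun mult0 :: "('a \<Rightarrow> 'a \<Rightarrow> 'a) \<Rightarrow> 'a option \<Rightarrow> 'a option \<Rightarrow> 'a option" where
  "mult0 m (Some a) (Some b) = Some (m a b)"
| "mult0 m _ _ = None"

text \<open>Letters of hat X: Pos x = x, Neg x = formal inverse of x.\<close>
datatype 'x letter = Pos 'x | Neg 'x

definition hat :: "'x set \<Rightarrow> 'x letter set" where
  "hat X = Pos ` X \<union> Neg ` X"

text \<open>Paths in the loop automaton (vertex set S^1): lpath S m X sigma a w b means
  w labels a path from a to b.\<close>
inductive lpath :: "'a set \<Rightarrow> ('a \<Rightarrow> 'a \<Rightarrow> 'a) \<Rightarrow> 'x set \<Rightarrow> ('x \<Rightarrow> 'a)
    \<Rightarrow> 'a option \<Rightarrow> 'x letter list \<Rightarrow> 'a option \<Rightarrow> bool"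
  for S m X \<sigma> where
  lp_nil: "a \<in> monoid1 S \<Longrightarrow> lpath S m X \<sigma> a [] a"
| lp_pos: "a \<in> monoid1 S \<Longrightarrow> x \<in> X \<Longrightarrow> lpath S m X \<sigma> (mult1 m a (Some (\<sigma> x))) w b
            \<Longrightarrow> lpath S m X \<sigma> a (Pos x # w) b"
| lp_neg: "a \<in> monoid1 S \<Longrightarrow> x \<in> X \<Longrightarrow> lpath S m X \<sigma> a w b
            \<Longrightarrow> lpath S m X \<sigma> (mult1 m a (Some (\<sigma> x))) (Neg x # w) b"

definition loop_problem :: "'a set \<Rightarrow> ('a \<Rightarrow> 'a \<Rightarrow> 'a) \<Rightarrow> 'x set \<Rightarrow> ('x \<Rightarrow> 'a)
    \<Rightarrow> 'x letter list set" where
  "loop_problem S m X \<sigma> = {w. lpath S m X \<sigma> None w None}"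

text \<open>The extension tau of sigma to Y = X \<union> {z}, with Y represented as Some ` X \<union> {None}
  (None = z) and S^0 with None = 0.\<close>
fun tau0 :: "('x \<Rightarrow> 'a) \<Rightarrow> 'x option \<Rightarrow> 'a option" where
  "tau0 \<sigma> None = None"
| "tau0 \<sigma> (Some x) = Some (\<sigma> x)"

end

theory Submission
  imports Defs
begin

lemma phi_mult:
  "map_option Some (mult1 m a (Some (\<sigma> x))) =
   mult1 (mult0 m) (map_option Some a) (Some (tau0 \<sigma> (Some x)))"
  by (cases a) auto

lemma hat_lists: "w \<in> lists (hat X) \<Longrightarrow> map (map_letter Some) w \<in> lists (hat (Some ` X))"
proof (induction w)
  case (Cons l w)
  then show ?case by (cases l) (auto simp: hat_def)
qed simp

lemma fwd:
  assumes "lpath S m X \<sigma> a w b"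
  shows "lpath (semigroup0 S) (mult0 m) (insert None (Some ` X)) (tau0 \<sigma>)
           (map_option Some a) (map (map_letter Some) w) (map_option Some b)
         \<and> w \<in> lists (hat X)"
  using assms
proof (induction rule: lpath.induct)
  case (lp_nil a)
  then show ?case
    by (auto simp: monoid1_def semigroup0_def intro!: lpath.lp_nil)
next
  case (lp_pos a x w b)
  have m: "map_option Some a \<in> monoid1 (semigroup0 S)"
    using lp_pos.hyps(1) by (auto simp: monoid1_def semigroup0_def)
  have "lpath (semigroup0 S) (mult0 m) (insert None (Some ` X)) (tau0 \<sigma>)
      (mult1 (mult0 m) (map_option Some a) (Some (tau0 \<sigma> (Some x))))
      (map (map_letter Some) w) (map_option Some b)" using lp_pos.IH by (simp add: phi_mult)
  from lpath.lp_pos[OF m _ this] lp_pos show ?case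
    by (auto simp: hat_def)
next
  case (lp_neg a x w b)
  have m: "map_option Some a \<in> monoid1 (semigroup0 S)"
    using lp_neg.hyps(1) by (auto simp: monoid1_def semigroup0_def)
  from lpath.lp_neg[OF m _ conjunct1[OF lp_neg.IH], of "Some x"] lp_neg show ?case
    by (auto simp: hat_def phi_mult)
qed

lemma bwd:
  assumes "lpath (semigroup0 S) (mult0 m) (insert None (Some ` X)) (tau0 \<sigma>) a' w' b'"
  shows "w' \<in> lists (hat (Some ` X)) \<Longrightarrow> a' = map_option Some a \<Longrightarrow>
     \<exists>w b. w' = map (map_letter Some) w \<and> b' = map_option Some b \<and> lpath S m X \<sigma> a w b"
  using assms
proof (induction arbitrary: a rule: lpath.induct)
  case (lp_nil a0)
  then have "a \<in> monoid1 S"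
    by (cases a) (auto simp: monoid1_def semigroup0_def)
  then show ?case using lp_nil by (auto intro!: exI[of _ "[]"] lpath.lp_nil)
next
  case (lp_pos a0 y w' b')
  from lp_pos.prems obtain x where y: "y = Some x" and x: "x \<in> X" and wl: "w' \<in> lists (hat (Some ` X))"
    by (auto simp: hat_def)
  have am: "a \<in> monoid1 S" using lp_pos.hyps(1) lp_pos.prems(2)
    by (cases a) (auto simp: monoid1_def semigroup0_def)
  have "mult1 (mult0 m) a0 (Some (tau0 \<sigma> y)) = map_option Some (mult1 m a (Some (\<sigma> x)))"
    using lp_pos.prems(2) y phi_mult by metis
  from lp_pos.IH[OF wl this] obtain w b where
    "w' = map (map_letter Some) w" "b' = map_option Some b"
    "lpath S m X \<sigma> (mult1 m a (Some (\<sigma> x))) w b" by blast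
  then show ?case using lpath.lp_pos[OF am x] y
    by (auto intro!: exI[of _ "Pos x # w"])
next
  case (lp_neg a0 y w' b')
  from lp_neg.prems obtain x where y: "y = Some x" and x: "x \<in> X" and wl: "w' \<in> lists (hat (Some ` X))"
    by (auto simp: hat_def)
  have "\<exists>c. a0 = map_option Some c \<and> c \<in> monoid1 S"
  proof -
    consider "a0 = None" | "a0 = Some None" | s where "a0 = Some (Some s)" "s \<in> S"
      using lp_neg.hyps(1) by (auto simp: monoid1_def semigroup0_def)
    then show ?thesis
    proof cases
      case 1 then show ?thesis by (auto simp: monoid1_def)
    next
      case 2
      then have "mult1 (mult0 m) a0 (Some (tau0 \<sigma> y)) = Some None" using y by simp
      then show ?thesis using lp_neg.prems(2) by (cases a) auto
    next
      case 3 then show ?thesis by (auto simp: monoid1_def intro!: exI[of _ "Some s"])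
    qed
  qed
  then obtain c where c: "a0 = map_option Some c" "c \<in> monoid1 S" by blast
  from lp_neg.IH[OF wl c(1)] obtain w b where
    wb: "w' = map (map_letter Some) w" "b' = map_option Some b"
    "lpath S m X \<sigma> c w b" by blast
  have "map_option Some a = map_option Some (mult1 m c (Some (\<sigma> x)))"
    using lp_neg.prems(2) c(1) y phi_mult by metis
  then have "a = mult1 m c (Some (\<sigma> x))"
    by (cases a; cases "mult1 m c (Some (\<sigma> x))") auto
  then show ?case using lpath.lp_neg[OF c(2) x wb(3)] wb y
    by (auto intro!: exI[of _ "Neg x # w"])
qed

theorem corollary3p3:
  fixes S :: "'a set" and m :: "'a \<Rightarrow> 'a \<Rightarrow> 'a" and X :: "'x set" and \<sigma> :: "'x \<Rightarrow> 'a"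
  assumes "semigroup_on S m"
    and "choice_of_generators S m X \<sigma>"
  shows "map (map_letter Some) ` loop_problem S m X \<sigma>
       = loop_problem (semigroup0 S) (mult0 m) (insert None (Some ` X)) (tau0 \<sigma>)
         \<inter> lists (hat (Some ` X))"
proof
  show "map (map_letter Some) ` loop_problem S m X \<sigma>
       \<subseteq> loop_problem (semigroup0 S) (mult0 m) (insert None (Some ` X)) (tau0 \<sigma>)
         \<inter> lists (hat (Some ` X))"
  proof
    fix v assume "v \<in> map (map_letter Some) ` loop_problem S m X \<sigma>"
    then obtain w where v: "v = map (map_letter Some) w" and w: "lpath S m X \<sigma> None w None"
      by (auto simp: loop_problem_def)
    from fwd[OF w] have "lpath (semigroup0 S) (mult0 m) (insert None (Some ` X)) (tau0 \<sigma>) None v None"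
      "w \<in> lists (hat X)" using v by auto
    moreover have "v \<in> lists (hat (Some ` X))"
      using \<open>w \<in> lists (hat X)\<close> v
      by (auto simp: hat_lists)
    ultimately show "v \<in> loop_problem (semigroup0 S) (mult0 m) (insert None (Some ` X)) (tau0 \<sigma>)
         \<inter> lists (hat (Some ` X))" by (simp add: loop_problem_def)
  qed
next
  show "loop_problem (semigroup0 S) (mult0 m) (insert None (Some ` X)) (tau0 \<sigma>)
         \<inter> lists (hat (Some ` X)) \<subseteq> map (map_letter Some) ` loop_problem S m X \<sigma>"
  proof
    fix v assume "v \<in> loop_problem (semigroup0 S) (mult0 m) (insert None (Some ` X)) (tau0 \<sigma>)
         \<inter> lists (hat (Some ` X))"
    then have p: "lpath (semigroup0 S) (mult0 m) (insert None (Some ` X)) (tau0 \<sigma>) None v None"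
      and l: "v \<in> lists (hat (Some ` X))" by (auto simp: loop_problem_def)
    from bwd[OF p l, of None] obtain w b where
      "v = map (map_letter Some) w" "None = map_option Some b" "lpath S m X \<sigma> None w b" by auto
    then show "v \<in> map (map_letter Some) ` loop_problem S m X \<sigma>"
      by (auto simp: loop_problem_def)
  qed
qed

end
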